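(* Let $d>0$, $a\ge0$, $r>0$ and $0<x_1<L$. Then $$\lim_{\xi\to+\infty}\lambda_1\big(d,a,r-\xi\chi_{(x_1,L]},(0,L)\big)=\lambda_1^D\big(d,a,r,(0,x_1)\big).$$
   Context: $\chi_{(x_1,L]}(x)=1$ for $x_1<x\le L$ and $0$ for $0\le x\le x_1$. For $0\le y_1<y_2\le L$ and bounded $s$, $\lambda_1(d,a,s,(y_1,y_2))$ denotes the principal eigenvalue (the eigenvalue with a positive eigenfunction) of $d\varphi''-a\varphi'+s(x)\varphi=\lambda\varphi$ on $(y_1,y_2)$, $d\varphi'(y_1)-a\varphi(y_1)=\varphi'(y_2)=0$. $\lambda_1^D(d,a,r,(y_1,y_2))$ denotes the principal eigenvalue of $d\varphi''-a\varphi'+r\varphi=\lambda\varphi$ on $(y_1,y_2)$ with $d\varphi'(y_1)-a\varphi(y_1)=0$ and $\varphi(y_2)=0$. *)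

theory Defs
  imports "HOL-Analysis.Analysis"
begin

definition chi :: "real \<Rightarrow> real \<Rightarrow> real \<Rightarrow> real" where
  "chi x1 L x = (if x1 < x \<and> x \<le> L then 1 else 0)"

text \<open>Strong (W^{2,\<infinity>}) solution of  d phi'' - a phi' + s phi = lam phi  on [y1,y2]:
  phi is C^1 on [y1,y2] with derivative phi' (one-sided at the endpoints), and
  d (phi'(x) - phi'(y1)) = integral over [y1,x] of (a phi' + (lam - s) phi).\<close>
definition is_eigsol ::
  "real \<Rightarrow> real \<Rightarrow> (real \<Rightarrow> real) \<Rightarrow> real \<Rightarrow> real \<Rightarrow> real \<Rightarrow> (real \<Rightarrow> real) \<Rightarrow> (real \<Rightarrow> real) \<Rightarrow> bool" where
  "is_eigsol d a s y1 y2 lam phi phi' \<longleftrightarrow>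
     (\<forall>x\<in>{y1..y2}. (phi has_real_derivative phi' x) (at x within {y1..y2})) \<and>
     continuous_on {y1..y2} phi' \<and>
     (\<forall>x\<in>{y1..y2}. ((\<lambda>t. a * phi' t + (lam - s t) * phi t) has_integral
                         d * (phi' x - phi' y1)) {y1..x})"

definition lambda1 :: "real \<Rightarrow> real \<Rightarrow> (real \<Rightarrow> real) \<Rightarrow> real \<Rightarrow> real \<Rightarrow> real" where
  "lambda1 d a s y1 y2 = (THE lam. \<exists>phi phi'. is_eigsol d a s y1 y2 lam phi phi' \<and>
       (\<forall>x\<in>{y1<..<y2}. phi x > 0) \<and>
       d * phi' y1 - a * phi y1 = 0 \<and> phi' y2 = 0)"

definition lambda1D :: "real \<Rightarrow> real \<Rightarrow> real \<Rightarrow> real \<Rightarrow> real \<Rightarrow> real" where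
  "lambda1D d a r y1 y2 = (THE lam. \<exists>phi phi'. is_eigsol d a (\<lambda>_. r) y1 y2 lam phi phi' \<and>
       (\<forall>x\<in>{y1<..<y2}. phi x > 0) \<and>
       d * phi' y1 - a * phi y1 = 0 \<and> phi y2 = 0)"

end

theory Submission
  imports Defs
begin

lemma eig_d2:
  assumes E: "is_eigsol d a s y1 y2 l f f'" and d: "d \<noteq> 0"
    and t: "y1 < t" "t < y2" "t \<noteq> p"
    and cs: "continuous (at t within ({y1..y2} - {p})) s"
  shows "(f' has_real_derivative (a * f' t + (l - s t) * f t) / d) (at t)"
proof -
  define F where "F = (\<lambda>u. a * f' u + (l - s u) * f u)"
  have hd: "\<forall>x\<in>{y1..y2}. (f has_real_derivative f' x) (at x within {y1..y2})"
   and cf': "continuous_on {y1..y2} f'"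
   and hi: "\<forall>x\<in>{y1..y2}. (F has_integral d * (f' x - f' y1)) {y1..x}"
    using E unfolding is_eigsol_def F_def by auto
  have int: "F integrable_on {y1..y2}" using hi t by auto
  have eq: "f' x = f' y1 + integral {y1..x} F / d" if "x \<in> {y1..y2}" for x
    using integral_unique[OF hi[rule_format, OF that]] d by (simp add: field_simps)
  have tin: "t \<in> {y1..y2} - {p}" using t by auto
  have c1: "continuous (at t within ({y1..y2} - {p})) f'"
    using cf' tin by (meson Diff_subset continuous_on_eq_continuous_within continuous_within_subset DiffD1)
  have c2: "continuous (at t within ({y1..y2} - {p})) f"
    using DERIV_continuous[OF hd[rule_format, of t]] tin continuous_within_subset by blast
  have cF: "continuous (at t within ({y1..y2} - {p})) F"
    unfolding F_def by (intro continuous_intros c1 c2 cs)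
  have D1: "((\<lambda>u. integral {y1..u} F) has_vector_derivative F t) (at t within ({y1..y2} - {p}))"
    by (rule integral_has_vector_derivative_continuous_at[OF int tin _ cF]) simp
  have D2: "((\<lambda>u. integral {y1..u} F) has_vector_derivative F t) (at t within ({y1<..<y2} - {p}))"
    by (rule has_vector_derivative_within_subset[OF D1]) auto
  have op: "open ({y1<..<y2} - {p})" by (intro open_Diff) auto
  have tin2: "t \<in> {y1<..<y2} - {p}" using t by auto
  have D3: "((\<lambda>u. integral {y1..u} F) has_real_derivative F t) (at t)"
    using D2 at_within_open[OF tin2 op] by (simp add: has_real_derivative_iff_has_vector_derivative)
  have D4: "((\<lambda>u. f' y1 + integral {y1..u} F / d) has_real_derivative F t / d) (at t)"
    using d by (auto intro!: derivative_eq_intros D3)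
  have "(f' has_real_derivative F t / d) (at t)"
  proof (rule has_field_derivative_transform_within_open[OF D4 op tin2])
    fix x assume "x \<in> {y1<..<y2} - {p}"
    hence "x \<in> {y1..y2}" by auto
    from eq[OF this] show "f' y1 + integral {y1..x} F / d = f' x" by simp
  qed
  then show ?thesis unfolding F_def .
qed

lemma incr_except:
  fixes G :: "real \<Rightarrow> real"
  assumes "y1 < y2" "continuous_on {y1..y2} G"
    and D: "\<And>t. y1 < t \<Longrightarrow> t < y2 \<Longrightarrow> t \<noteq> p \<Longrightarrow> \<exists>D. DERIV G t :> D \<and> D > 0"
  shows "G y1 < G y2"
proof (cases "y1 < p \<and> p < y2")
  case True
  have "G y1 < G p"
    by (rule DERIV_pos_imp_increasing_open) (use True assms in \<open>auto intro: continuous_on_subset\<close>)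
  moreover have "G p < G y2"
    by (rule DERIV_pos_imp_increasing_open) (use True assms in \<open>auto intro: continuous_on_subset\<close>)
  ultimately show ?thesis by simp
next
  case False
  show ?thesis
    by (rule DERIV_pos_imp_increasing_open) (use False assms in \<open>auto\<close>)
qed

lemma green_le:
  assumes y: "y1 < y2" and d: "d > 0"
    and Ef: "is_eigsol d a s y1 y2 l1 f f'" and Eg: "is_eigsol d a s y1 y2 l2 g g'"
    and pf: "\<forall>x\<in>{y1<..<y2}. f x > 0" and pg: "\<forall>x\<in>{y1<..<y2}. g x > 0"
    and cs: "\<And>t. y1 < t \<Longrightarrow> t < y2 \<Longrightarrow> t \<noteq> p \<Longrightarrow> continuous (at t within ({y1..y2} - {p})) s"
    and B1: "f' y1 * g y1 - g' y1 * f y1 = 0"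
    and B2: "f' y2 * g y2 - g' y2 * f y2 = 0"
  shows "l1 \<le> l2"
proof (rule ccontr)
  assume "\<not> l1 \<le> l2"
  hence ll: "l1 > l2" by simp
  define G where "G = (\<lambda>x. exp (- (a / d) * x) * (f' x * g x - g' x * f x))"
  have hf: "\<forall>x\<in>{y1..y2}. (f has_real_derivative f' x) (at x within {y1..y2})"
   and cf': "continuous_on {y1..y2} f'"
    using Ef unfolding is_eigsol_def by auto
  have hg: "\<forall>x\<in>{y1..y2}. (g has_real_derivative g' x) (at x within {y1..y2})"
   and cg': "continuous_on {y1..y2} g'"
    using Eg unfolding is_eigsol_def by auto
  have cf: "continuous_on {y1..y2} f"
    using hf by (meson DERIV_continuous continuous_on_eq_continuous_within)
  have cg: "continuous_on {y1..y2} g"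
    using hg by (meson DERIV_continuous continuous_on_eq_continuous_within)
  have cG: "continuous_on {y1..y2} G"
    unfolding G_def by (intro continuous_intros cf cg cf' cg')
  have "G y1 < G y2"
  proof (rule incr_except[OF y cG])
    fix t assume t: "y1 < t" "t < y2" "t \<noteq> p"
    have at: "at t within {y1..y2} = at t" using t by (simp add: at_within_Icc_at)
    have df: "(f has_real_derivative f' t) (at t)" using hf[rule_format, of t] t at by simp
    have dg: "(g has_real_derivative g' t) (at t)" using hg[rule_format, of t] t at by simp
    have df': "(f' has_real_derivative (a * f' t + (l1 - s t) * f t) / d) (at t)"
      by (rule eig_d2[OF Ef _ t cs[OF t]]) (use d in simp)
    have dg': "(g' has_real_derivative (a * g' t + (l2 - s t) * g t) / d) (at t)"
      by (rule eig_d2[OF Eg _ t cs[OF t]]) (use d in simp)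
    have "(G has_real_derivative exp (- (a / d) * t) * ((l1 - l2) * f t * g t / d)) (at t)"
      unfolding G_def
      apply (rule derivative_eq_intros df dg df' dg' | simp)+
      using d by (simp add: field_simps)
    moreover have "exp (- (a / d) * t) * ((l1 - l2) * f t * g t / d) > 0"
      using ll d pf pg t by (simp add: mult_pos_pos)
    ultimately show "\<exists>D. (G has_real_derivative D) (at t) \<and> D > 0" by blast
  qed
  moreover have "G y1 = 0" "G y2 = 0" unfolding G_def using B1 B2 by auto
  ultimately show False by simp
qed


definition L0 :: "real \<Rightarrow> real \<Rightarrow> real \<Rightarrow> real" where "L0 k w x = exp (k*x) * (w * cos (w*x) + k * sin (w*x))"
definition L1 :: "real \<Rightarrow> real \<Rightarrow> real \<Rightarrow> real" where "L1 k w x = exp (k*x) * (2*k*w * cos (w*x) + (k^2 - w^2) * sin (w*x))"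
definition L2 :: "real \<Rightarrow> real \<Rightarrow> real \<Rightarrow> real" where "L2 k w x = exp (k*x) * ((3*k^2*w - w^3) * cos (w*x) + (k^3 - 3*k*w^2) * sin (w*x))"

lemma L0_deriv: "(L0 k w has_real_derivative L1 k w x) (at x)"
  unfolding L0_def L1_def
  apply (rule derivative_eq_intros refl | simp)+
  by (simp add: algebra_simps power2_eq_square)

lemma L1_deriv: "(L1 k w has_real_derivative L2 k w x) (at x)"
  unfolding L2_def L1_def
  apply (rule derivative_eq_intros refl | simp)+
  by (simp add: algebra_simps power2_eq_square power3_eq_cube)

lemma L_ode: "(d::real) * L2 k w x = (2*d*k) * L1 k w x + ((r - d*k^2 - d*w^2) - r) * L0 k w x"
  unfolding L0_def L1_def L2_def
  by (simp add: algebra_simps power2_eq_square power3_eq_cube)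

lemma trig_form:
  assumes w: "w > 0"
  shows "w * cos th + k * sin th = (w / cos (arctan (k/w))) * cos (th - arctan (k/w))"
    and "k * cos th - w * sin th = (w / cos (arctan (k/w))) * sin (arctan (k/w) - th)"
proof -
  define al where "al = arctan (k/w)"
  have ca: "cos al > 0" unfolding al_def cos_arctan
    by (metis add_pos_nonneg real_sqrt_gt_zero zero_le_power2 zero_less_divide_1_iff zero_less_one)
  have "tan al = k / w" unfolding al_def by (simp add: tan_arctan)
  hence kk: "k = w * sin al / cos al" using w ca by (simp add: tan_def field_simps)
  show "w * cos th + k * sin th = (w / cos (arctan (k/w))) * cos (th - arctan (k/w))"
    unfolding al_def[symmetric] cos_diff using ca by (subst kk) (simp add: field_simps)
  show "k * cos th - w * sin th = (w / cos (arctan (k/w))) * sin (arctan (k/w) - th)"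
    unfolding al_def[symmetric] sin_diff using ca by (subst kk) (simp add: field_simps)
qed

lemma L0_pos:
  assumes w: "w > 0" and x: "0 \<le> x" and lt: "w*x < pi/2 + arctan (k/w)" and k: "k \<ge> 0"
  shows "L0 k w x > 0"
proof -
  have ca: "cos (arctan (k/w)) > 0" unfolding cos_arctan by (simp add: add_pos_nonneg add_pos_pos)
  have a0: "arctan (k/w) \<ge> 0" using k w by simp
  have "arctan (k/w) < pi/2" by (rule arctan_ubound)
  hence "cos (w*x - arctan (k/w)) > 0"
  proof (intro cos_gt_zero_pi)
    have "w*x \<ge> 0" using w x by simp
    thus "- (pi / 2) < w * x - arctan (k / w)" using \<open>arctan (k/w) < pi/2\<close> by linarith
  qed (use lt in linarith)
  thus ?thesis unfolding L0_def trig_form(1)[OF w] using ca w by simp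
qed

lemma L0_zero:
  assumes w: "w > 0" and eq: "w*x = pi/2 + arctan (k/w)"
  shows "L0 k w x = 0" "L1 k w x < 0"
proof -
  have ca: "cos (arctan (k/w)) > 0" unfolding cos_arctan by (simp add: add_pos_nonneg add_pos_pos)
  have b0: "w * cos (w*x) + k * sin (w*x) = 0"
    unfolding trig_form(1)[OF w] eq by simp
  thus "L0 k w x = 0" unfolding L0_def by simp
  have b1: "k * cos (w*x) - w * sin (w*x) = - w / cos (arctan (k/w))"
    unfolding trig_form(2)[OF w] eq by simp
  have "L1 k w x = exp (k*x) * (k * (w * cos (w*x) + k * sin (w*x)) + w * (k * cos (w*x) - w * sin (w*x)))"
    unfolding L1_def by (simp add: algebra_simps power2_eq_square)
  also have "\<dots> = exp (k*x) * (- w * w / cos (arctan (k/w)))" unfolding b0 b1 by simp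
  also have "\<dots> < 0" using w ca by (simp add: mult_pos_neg divide_neg_pos)
  finally show "L1 k w x < 0" .
qed

lemma piece_deriv:
  fixes g h :: "real \<Rightarrow> real"
  assumes "(g has_real_derivative D) (at c)" "(h has_real_derivative D) (at c)" "g c = h c"
  shows "((\<lambda>t. if t \<le> c then g t else h t) has_real_derivative D) (at c)"
proof -
  have "((\<lambda>t. if t \<in> {..c} then g t else h t) has_vector_derivative
    (if c \<in> {..c} then D else D)) (at c within UNIV)"
    apply (rule has_vector_derivative_If_within_closures[where T="{c<..}"])
    using assms by (auto simp: has_real_derivative_iff_has_vector_derivative[symmetric]
        intro: has_field_derivative_at_within)
  thus ?thesis by (simp add: has_real_derivative_iff_has_vector_derivative)
qed


definition R0 :: "real \<Rightarrow> real \<Rightarrow> real \<Rightarrow> real \<Rightarrow> real" where "R0 k n L x = exp (k*x) * ((n+k) * exp (n*(L-x)) + (n-k) * exp (-(n*(L-x))))"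
definition R1 :: "real \<Rightarrow> real \<Rightarrow> real \<Rightarrow> real \<Rightarrow> real" where "R1 k n L x = exp (k*x) * ((n^2-k^2) * (exp (-(n*(L-x))) - exp (n*(L-x))))"
definition R2 :: "real \<Rightarrow> real \<Rightarrow> real \<Rightarrow> real \<Rightarrow> real" where "R2 k n L x = exp (k*x) * ((n^2-k^2) * ((n+k) * exp (-(n*(L-x))) + (n-k) * exp (n*(L-x))))"

lemma R0_deriv: "(R0 k n L has_real_derivative R1 k n L x) (at x)"
  unfolding R0_def R1_def
  apply (rule derivative_eq_intros refl | simp)+
  by (simp add: algebra_simps power2_eq_square)

lemma R1_deriv: "(R1 k n L has_real_derivative R2 k n L x) (at x)"
  unfolding R2_def R1_def
  apply (rule derivative_eq_intros refl | simp)+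
  by (simp add: algebra_simps power2_eq_square)

lemma R_ode: assumes "d*n^2 = xi - d*w^2"
  shows "(d::real) * R2 k n L x = (2*d*k) * R1 k n L x + ((r - d*k^2 - d*w^2) - (r - xi)) * R0 k n L x"
proof -
  have xi: "xi = d*n^2 + d*w^2" using assms by simp
  show ?thesis unfolding R0_def R1_def R2_def xi
    by (simp add: algebra_simps power2_eq_square)
qed

lemma R1_L: "R1 k n L L = 0" unfolding R1_def by simp

lemma R0_pos: "n > k \<Longrightarrow> k \<ge> 0 \<Longrightarrow> R0 k n L x > 0"
proof -
  assume a: "n > k" "k \<ge> 0"
  have "(n+k) * exp (n*(L-x)) > 0" using a by (intro mult_pos_pos) auto
  moreover have "(n-k) * exp (-(n*(L-x))) > 0" using a by (intro mult_pos_pos) auto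
  ultimately
  show ?thesis unfolding R0_def by simp
qed

lemma omegaD_ex:
  fixes x1 k :: real
  assumes "x1 > 0" "k \<ge> 0"
  shows "\<exists>w. pi/(2*x1) \<le> w \<and> w \<le> pi/x1 \<and> w*x1 = pi/2 + arctan (k/w)"
proof -
  define f where "f = (\<lambda>w. w*x1 - arctan (k/w))"
  have p: "pi/(2*x1) > 0" using assms by simp
  have "\<exists>w. pi/(2*x1) \<le> w \<and> w \<le> pi/x1 \<and> f w = pi/2"
  proof (rule IVT')
    show "f (pi/(2*x1)) \<le> pi/2" unfolding f_def using assms by simp
    show "pi/2 \<le> f (pi/x1)" unfolding f_def using assms arctan_ubound[of "k/(pi/x1)"] by simp
    show "pi/(2*x1) \<le> pi/x1" using assms by (simp add: divide_left_mono)
    show "continuous_on {pi/(2*x1)..pi/x1} f" unfolding f_def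
      using p by (intro continuous_intros) auto
  qed
  thus ?thesis unfolding f_def by (auto simp: algebra_simps)
qed

lemma omega_lt:
  fixes x1 k w wD :: real
  assumes "0 < w" "w < wD" "wD*x1 = pi/2 + arctan (k/wD)" "k \<ge> 0" "x1 > 0"
  shows "w*x1 < pi/2 + arctan (k/w)"
proof -
  have "k/wD \<le> k/w" using assms by (intro divide_left_mono) auto
  hence "arctan (k/wD) \<le> arctan (k/w)" by (simp add: arctan_le_iff)
  moreover have "w*x1 < wD*x1" using assms(1,2,5) by (simp add: mult_strict_right_mono)
  ultimately show ?thesis using assms(3) by linarith
qed

lemma mk_eigsol:
  fixes phi phi' :: "real \<Rightarrow> real"
  assumes y: "y1 \<le> y2" and d: "d \<noteq> 0"
    and hd: "\<And>x. x \<in> {y1..y2} \<Longrightarrow> (phi has_real_derivative phi' x) (at x within {y1..y2})"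
    and c: "continuous_on {y1..y2} phi'"
    and h2: "\<And>x. y1 < x \<Longrightarrow> x < y2 \<Longrightarrow> x \<noteq> p \<Longrightarrow>
        (phi' has_real_derivative (a * phi' x + (lam - s x) * phi x) / d) (at x)"
  shows "is_eigsol d a s y1 y2 lam phi phi'"
  unfolding is_eigsol_def
proof (intro conjI ballI)
  show "x \<in> {y1..y2} \<Longrightarrow> (phi has_real_derivative phi' x) (at x within {y1..y2})" for x by (rule hd)
  show "continuous_on {y1..y2} phi'" by (rule c)
  fix x assume x: "x \<in> {y1..y2}"
  have "((\<lambda>t. a * phi' t + (lam - s t) * phi t) has_integral (d * phi' x - d * phi' y1)) {y1..x}"
  proof (rule fundamental_theorem_of_calculus_interior_strong[where S="{p}" and f="\<lambda>t. d * phi' t"])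
    show "finite {p}" by simp
    show "y1 \<le> x" using x by simp
    show "continuous_on {y1..x} (\<lambda>t. d * phi' t)"
      using x by (intro continuous_intros continuous_on_subset[OF c]) auto
    fix t assume t: "t \<in> {y1<..<x} - {p}"
    have "((\<lambda>t. d * phi' t) has_real_derivative d * ((a * phi' t + (lam - s t) * phi t) / d)) (at t)"
      using t x by (intro DERIV_cmult h2) auto
    thus "((\<lambda>t. d * phi' t) has_vector_derivative a * phi' t + (lam - s t) * phi t) (at t)"
      using d by (simp add: has_real_derivative_iff_has_vector_derivative)
  qed
  thus "((\<lambda>t. a * phi' t + (lam - s t) * phi t) has_integral d * (phi' x - phi' y1)) {y1..x}"
    by (simp add: algebra_simps)
qed


lemma M_pos:
  fixes k n L x1 w :: real
  assumes k: "k \<ge> 0" and p: "L0 k w x1 > 0"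
    and n: "n \<ge> k + 4*\<bar>L1 k w x1\<bar> / L0 k w x1 + 1" and T: "n*(L-x1) \<ge> 1"
  shows "R0 k n L x1 * L1 k w x1 - L0 k w x1 * R1 k n L x1 > 0"
proof -
  define p where "p = L0 k w x1"
  define q where "q = L1 k w x1"
  define E where "E = exp (n*(L-x1))"
  define F where "F = exp (-(n*(L-x1)))"
  define c where "c = exp (k*x1)"
  have pp: "p > 0" using p p_def by simp
  have c0: "c > 0" unfolding c_def by simp
  have "exp 1 \<le> E" unfolding E_def using T by simp
  moreover have "(2::real) \<le> exp 1" using exp_ge_add_one_self[of 1] by simp
  ultimately have E2: "E \<ge> 2" by simp
  have EF: "E * F = 1" unfolding E_def F_def by (simp add: exp_minus)
  have F0: "F > 0" unfolding F_def by simp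
  have FE: "F \<le> E / 2"
  proof -
    have "F = 1 / E" using EF E2 by (simp add: field_simps)
    also have "\<dots> \<le> 1/2" using E2 by simp
    also have "\<dots> \<le> E/2" using E2 by simp
    finally show ?thesis .
  qed
  have qp: "4*\<bar>q\<bar> / p \<ge> 0" using pp by simp
  have nk: "n - k \<ge> 4*\<bar>q\<bar> / p + 1" using n unfolding p_def q_def by simp
  hence nk0: "n - k > 0" using qp by linarith
  have npk: "n + k > 0" using nk0 k by simp
  have h1: "p*(n-k) > 4*\<bar>q\<bar>"
  proof -
    have "p*(n-k) \<ge> p*(4*\<bar>q\<bar> / p + 1)" using nk pp by (intro mult_left_mono) auto
    also have "p*(4*\<bar>q\<bar> / p + 1) = 4*\<bar>q\<bar> + p" using pp by (simp add: field_simps)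
    finally show ?thesis using pp by simp
  qed
  define X where "X = (n+k)*E + (n-k)*F"
  have X0: "X \<ge> 0" unfolding X_def using npk nk0 E2 F0 by simp
  have XE: "X \<le> 2*(n+k)*E"
  proof -
    have "(n-k)*F \<le> (n+k)*E" using nk0 k F0 FE E2 by (intro mult_mono) auto
    thus ?thesis unfolding X_def by (simp add: algebra_simps)
  qed
  have qX: "q*X \<ge> - (\<bar>q\<bar> * (2*(n+k)*E))"
  proof -
    have "\<bar>q\<bar> * X \<le> \<bar>q\<bar> * (2*(n+k)*E)" using XE by (intro mult_left_mono) auto
    moreover have "q*X \<ge> - (\<bar>q\<bar>*X)"
    proof -
      have "-\<bar>q\<bar> \<le> q" by simp
      from mult_right_mono[OF this X0] show ?thesis by simp
    qed
    ultimately show ?thesis by linarith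
  qed
  have EmF: "E - F \<ge> E/2" using FE by simp
  have pt: "p*((n-k)*(n+k))*(E-F) \<ge> p*((n-k)*(n+k))*(E/2)"
    using EmF pp nk0 npk by (intro mult_left_mono) auto
  have R0e: "R0 k n L x1 = c * X" unfolding R0_def X_def c_def E_def F_def by simp
  have R1e: "R1 k n L x1 = c * ((n^2-k^2)*(F-E))" unfolding R1_def c_def E_def F_def by simp
  have eqM: "R0 k n L x1 * L1 k w x1 - L0 k w x1 * R1 k n L x1 = c * (q*X + p*((n-k)*(n+k))*(E-F))"
    unfolding R0e R1e p_def[symmetric] q_def[symmetric] by (simp add: algebra_simps power2_eq_square)
  have h1': "q*X + p*((n-k)*(n+k))*(E-F) \<ge> - (\<bar>q\<bar> * (2*(n+k)*E)) + p*((n-k)*(n+k))*(E/2)"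
    using qX pt by linarith
  have h2': "- (\<bar>q\<bar> * (2*(n+k)*E)) + p*((n-k)*(n+k))*(E/2) = ((n+k)*E/2) * (p*(n-k) - 4*\<bar>q\<bar>)"
    by (simp add: algebra_simps)
  have h3': "((n+k)*E/2) * (p*(n-k) - 4*\<bar>q\<bar>) > 0" using npk E2 h1 by (intro mult_pos_pos) auto
  have pos: "q*X + p*((n-k)*(n+k))*(E-F) > 0" using h1' h2' h3' by linarith
  show ?thesis unfolding eqM using c0 pos by (rule mult_pos_pos)
qed


lemma chi_cont:
  assumes "0 < t" "t < L" "t \<noteq> x1"
  shows "continuous (at t within S) (\<lambda>x. r - xi * chi x1 L x)"
proof -
  have ev: "eventually (\<lambda>x. r - xi * chi x1 L x = r - xi * chi x1 L t) (nhds t)"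
  proof (cases "t < x1")
    case True
    have "eventually (\<lambda>x. x \<in> {..<x1}) (nhds t)" using True by (intro eventually_nhds_in_open) auto
    thus ?thesis by eventually_elim (use True in \<open>auto simp: chi_def\<close>)
  next
    case False
    hence "x1 < t" using assms by simp
    hence "eventually (\<lambda>x. x \<in> {x1<..<L}) (nhds t)" using assms by (intro eventually_nhds_in_open) auto
    thus ?thesis by eventually_elim (use \<open>x1 < t\<close> assms in \<open>auto simp: chi_def\<close>)
  qed
  have "isCont (\<lambda>x. r - xi * chi x1 L x) t"
    using isCont_cong[OF ev] by simp
  thus ?thesis by (rule continuous_at_imp_continuous_at_within)
qed

lemma bc_left:
  fixes d a f0 f1 g0 g1 :: real
  assumes "d > 0" "d * f1 - a * f0 = 0" "d * g1 - a * g0 = 0"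
  shows "f1 * g0 - g1 * f0 = 0"
proof -
  have "d * (f1 * g0 - g1 * f0) = (d*f1) * g0 - (d*g1) * f0" by (simp add: algebra_simps)
  also have "\<dots> = 0" using assms(2,3) by (simp add: algebra_simps)
  finally show ?thesis using assms(1) by simp
qed


lemma L_eigsol:
  fixes d a k w r y1 y2 p :: real
  assumes d: "d > 0" and ka: "a = 2*d*k" and y: "y1 \<le> y2"
  shows "is_eigsol d a (\<lambda>_. r) y1 y2 (r - d*k^2 - d*w^2) (L0 k w) (L1 k w)"
proof (rule mk_eigsol[where p=p])
  show "y1 \<le> y2" "d \<noteq> 0" using y d by auto
  show "(L0 k w has_real_derivative L1 k w x) (at x within {y1..y2})" for x
    by (rule has_field_derivative_at_within[OF L0_deriv])
  show "continuous_on {y1..y2} (L1 k w)"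
    by (meson DERIV_isCont L1_deriv continuous_at_imp_continuous_on)
  fix x
  have "L2 k w x = (a * L1 k w x + ((r - d*k^2 - d*w^2) - r) * L0 k w x) / d"
    using L_ode[of d k w x r] d ka by (simp add: field_simps)
  thus "(L1 k w has_real_derivative (a * L1 k w x + ((r - d*k^2 - d*w^2) - r) * L0 k w x) / d) (at x)"
    using L1_deriv[of k w x] by simp
qed

lemma lambda1D_val:
  fixes d a r x1 k wD :: real
  assumes d: "d > 0" and a: "a \<ge> 0" and x1: "x1 > 0" and ka: "a = 2*d*k"
    and wD: "wD > 0" "wD*x1 = pi/2 + arctan (k/wD)"
  shows "lambda1D d a r 0 x1 = r - d*k^2 - d*wD^2"
  unfolding lambda1D_def
proof (rule the_equality)
  have k: "k \<ge> 0" using ka a d by (simp add: zero_le_mult_iff)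
  have x10: "0 \<le> x1" using x1 by simp
  have pos: "\<forall>x\<in>{0<..<x1}. L0 k wD x > 0"
  proof
    fix x assume x: "x \<in> {0<..<x1}"
    have "wD*x < wD*x1" using x wD(1) by (simp add: mult_strict_left_mono)
    hence "wD*x < pi/2 + arctan (k/wD)" using wD(2) by linarith
    thus "L0 k wD x > 0" using x wD k by (intro L0_pos) auto
  qed
  have bc0: "d * L1 k wD 0 - a * L0 k wD 0 = 0" unfolding L0_def L1_def ka by simp
  show "\<exists>phi phi'. is_eigsol d a (\<lambda>_. r) 0 x1 (r - d*k^2 - d*wD^2) phi phi' \<and>
       (\<forall>x\<in>{0<..<x1}. phi x > 0) \<and> d * phi' 0 - a * phi 0 = 0 \<and> phi x1 = 0"
    using L_eigsol[OF d ka x10, where w=wD and r=r] pos bc0 L0_zero(1)[OF wD] by blast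
  fix lam assume "\<exists>phi phi'. is_eigsol d a (\<lambda>_. r) 0 x1 lam phi phi' \<and>
       (\<forall>x\<in>{0<..<x1}. phi x > 0) \<and> d * phi' 0 - a * phi 0 = 0 \<and> phi x1 = 0"
  then obtain g g' where Eg: "is_eigsol d a (\<lambda>_. r) 0 x1 lam g g'" and pg: "\<forall>x\<in>{0<..<x1}. g x > 0"
    and g0: "d * g' 0 - a * g 0 = 0" and g1: "g x1 = 0" by blast
  have Ef: "is_eigsol d a (\<lambda>_. r) 0 x1 (r - d*k^2 - d*wD^2) (L0 k wD) (L1 k wD)"
    using L_eigsol[OF d ka x10, where w=wD and r=r] by simp
  have f1: "L0 k wD x1 = 0" using L0_zero(1)[OF wD] .
  have B1: "L1 k wD 0 * g 0 - g' 0 * L0 k wD 0 = 0" by (rule bc_left[OF d bc0 g0])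
  have B1': "g' 0 * L0 k wD 0 - L1 k wD 0 * g 0 = 0" using B1 by simp
  have cs: "continuous (at t within ({0..x1} - {0})) (\<lambda>_. r)" for t by simp
  have "r - d*k^2 - d*wD^2 \<le> lam"
    by (rule green_le[OF x1 d Ef Eg pos pg cs B1]) (simp add: f1 g1)
  moreover have "lam \<le> r - d*k^2 - d*wD^2"
    by (rule green_le[OF x1 d Eg Ef pg pos cs B1']) (simp add: f1 g1)
  ultimately show "lam = r - d*k^2 - d*wD^2" by simp
qed


lemma glue_deriv:
  fixes g h g' h' :: "real \<Rightarrow> real"
  assumes dg: "\<And>x. (g has_real_derivative g' x) (at x)" and dh: "\<And>x. (h has_real_derivative h' x) (at x)"
    and e0: "g c = h c" and e1: "g' c = h' c"
  shows "((\<lambda>t. if t \<le> c then g t else h t) has_real_derivative (if x \<le> c then g' x else h' x)) (at x)"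
proof (cases "x < c")
  case True
  have "((\<lambda>t. if t \<le> c then g t else h t) has_real_derivative g' x) (at x)"
    by (rule has_field_derivative_transform_within_open[OF dg, where S="{..<c}"]) (use True in auto)
  thus ?thesis using True by simp
next
  case False
  show ?thesis
  proof (cases "x = c")
    case True
    have "(h has_real_derivative g' c) (at c)" using dh[of c] e1 by simp
    from piece_deriv[OF dg[of c] this e0] show ?thesis using True by simp
  next
    case False
    hence "x > c" using \<open>\<not> x < c\<close> by simp
    have "((\<lambda>t. if t \<le> c then g t else h t) has_real_derivative h' x) (at x)"
      by (rule has_field_derivative_transform_within_open[OF dh, where S="{c<..}"]) (use \<open>x > c\<close> in auto)
    thus ?thesis using \<open>x > c\<close> by simp
  qed
qed

lemma lambda1_val:
  fixes d a r x1 L k w n xi :: real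
  assumes d: "d > 0" and a: "a \<ge> 0" and ka: "a = 2*d*k" and x1: "0 < x1" "x1 < L"
    and w: "0 < w" "w*x1 < pi/2 + arctan (k/w)" and n: "n > k" and nxi: "d*n^2 = xi - d*w^2"
    and M: "R0 k n L x1 * L1 k w x1 = L0 k w x1 * R1 k n L x1"
  shows "lambda1 d a (\<lambda>x. r - xi * chi x1 L x) 0 L = r - d*k^2 - d*w^2"
proof -
  have k: "k \<ge> 0" using ka a d by (simp add: zero_le_mult_iff)
  define s where "s = (\<lambda>x. r - xi * chi x1 L x)"
  define lam where "lam = r - d*k^2 - d*w^2"
  define A where "A = R0 k n L x1"
  define B where "B = L0 k w x1"
  have A0: "A > 0" unfolding A_def using n k by (rule R0_pos)
  have Lpos: "L0 k w x > 0" if "0 \<le> x" "x \<le> x1" for x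
  proof -
    have "w*x \<le> w*x1" using that w by (simp add: mult_left_mono)
    hence "w*x < pi/2 + arctan (k/w)" using w(2) by linarith
    thus ?thesis using that w k by (intro L0_pos) auto
  qed
  have B0: "B > 0" unfolding B_def using Lpos x1 by simp
  have Mv: "A * L0 k w x1 = B * R0 k n L x1" unfolding A_def B_def by simp
  have Md: "A * L1 k w x1 = B * R1 k n L x1" unfolding A_def B_def by (rule M)
  define phi where "phi = (\<lambda>x. if x \<le> x1 then A * L0 k w x else B * R0 k n L x)"
  define phi' where "phi' = (\<lambda>x. if x \<le> x1 then A * L1 k w x else B * R1 k n L x)"
  have dphi: "(phi has_real_derivative phi' x) (at x)" for x
    unfolding phi_def phi'_def
    by (rule glue_deriv) (auto intro!: derivative_eq_intros L0_deriv R0_deriv simp: Mv Md)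
  have cL1: "continuous_on S (L1 k w)" for S
    by (meson DERIV_isCont L1_deriv continuous_at_imp_continuous_on)
  have cR1: "continuous_on S (R1 k n L)" for S
    by (meson DERIV_isCont R1_deriv continuous_at_imp_continuous_on)
  have cphi': "continuous_on UNIV phi'"
    unfolding phi'_def
  proof (rule continuous_on_cases_le)
    show "continuous_on {x \<in> UNIV. x \<le> x1} (\<lambda>x. A * L1 k w x)"
      by (rule continuous_on_mult_left[OF cL1])
    show "continuous_on {x \<in> UNIV. x1 \<le> x} (\<lambda>x. B * R1 k n L x)"
      by (rule continuous_on_mult_left[OF cR1])
    show "continuous_on UNIV (\<lambda>x. x)" by (rule continuous_on_id)
  qed (simp add: Md)
  have h2: "(phi' has_real_derivative (a * phi' x + (lam - s x) * phi x) / d) (at x)"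
    if x: "0 < x" "x < L" "x \<noteq> x1" for x
  proof (cases "x < x1")
    case True
    have sx: "s x = r" unfolding s_def chi_def using True by simp
    have "((\<lambda>t. A * L1 k w t) has_real_derivative A * L2 k w x) (at x)"
      by (rule DERIV_cmult[OF L1_deriv])
    moreover have "A * L2 k w x = (a * (A * L1 k w x) + (lam - s x) * (A * L0 k w x)) / d"
    proof -
      have e: "L2 k w x = (2*d*k * L1 k w x + ((r - d*k^2 - d*w^2) - r) * L0 k w x) / d"
        using L_ode[of d k w x r] d by (simp add: field_simps)
      show ?thesis unfolding e sx lam_def ka using d by (simp add: field_simps)
    qed
    ultimately have "((\<lambda>t. A * L1 k w t) has_real_derivative (a * phi' x + (lam - s x) * phi x) / d) (at x)"
      unfolding phi_def phi'_def using True by simp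
    thus ?thesis
      by (rule has_field_derivative_transform_within_open[where S="{..<x1}"]) (use True in \<open>auto simp: phi'_def\<close>)
  next
    case False
    hence xg: "x > x1" using x by simp
    have sx: "s x = r - xi" unfolding s_def chi_def using xg x by simp
    have "((\<lambda>t. B * R1 k n L t) has_real_derivative B * R2 k n L x) (at x)"
      by (rule DERIV_cmult[OF R1_deriv])
    moreover have "B * R2 k n L x = (a * (B * R1 k n L x) + (lam - s x) * (B * R0 k n L x)) / d"
    proof -
      have e: "R2 k n L x = (2*d*k * R1 k n L x + ((r - d*k^2 - d*w^2) - (r - xi)) * R0 k n L x) / d"
        using R_ode[OF nxi, of k L x r] d by (simp add: field_simps)
      show ?thesis unfolding e sx lam_def ka using d by (simp add: field_simps)
    qed
    ultimately have "((\<lambda>t. B * R1 k n L t) has_real_derivative (a * phi' x + (lam - s x) * phi x) / d) (at x)"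
      unfolding phi_def phi'_def using xg by simp
    thus ?thesis
      by (rule has_field_derivative_transform_within_open[where S="{x1<..}"]) (use xg in \<open>auto simp: phi'_def\<close>)
  qed
  have Ef: "is_eigsol d a s 0 L lam phi phi'"
  proof (rule mk_eigsol[where p=x1])
    show "0 \<le> L" "d \<noteq> 0" using x1 d by auto
    show "(phi has_real_derivative phi' x) (at x within {0..L})" for x
      by (rule has_field_derivative_at_within[OF dphi])
    show "continuous_on {0..L} phi'" using cphi' by (rule continuous_on_subset) simp
    show "\<And>x. 0 < x \<Longrightarrow> x < L \<Longrightarrow> x \<noteq> x1 \<Longrightarrow>
        (phi' has_real_derivative (a * phi' x + (lam - s x) * phi x) / d) (at x)" by (rule h2)
  qed
  have pf: "\<forall>x\<in>{0<..<L}. phi x > 0"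
  proof
    fix x assume x: "x \<in> {0<..<L}"
    show "phi x > 0"
    proof (cases "x \<le> x1")
      case True thus ?thesis unfolding phi_def using A0 Lpos[of x] x by simp
    next
      case False thus ?thesis unfolding phi_def using B0 R0_pos[OF n k] by simp
    qed
  qed
  have bc0: "d * phi' 0 - a * phi 0 = 0"
    unfolding phi_def phi'_def using x1 unfolding L0_def L1_def ka by (simp add: algebra_simps)
  have bcL: "phi' L = 0" unfolding phi'_def using x1 by (simp add: R1_L)
  show ?thesis
    unfolding s_def[symmetric] lam_def[symmetric] lambda1_def
  proof (rule the_equality)
    show "\<exists>phi phi'. is_eigsol d a s 0 L lam phi phi' \<and> (\<forall>x\<in>{0<..<L}. phi x > 0) \<and>
       d * phi' 0 - a * phi 0 = 0 \<and> phi' L = 0"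
      using Ef pf bc0 bcL by blast
    fix l assume "\<exists>phi phi'. is_eigsol d a s 0 L l phi phi' \<and> (\<forall>x\<in>{0<..<L}. phi x > 0) \<and>
       d * phi' 0 - a * phi 0 = 0 \<and> phi' L = 0"
    then obtain g g' where Eg: "is_eigsol d a s 0 L l g g'" and pg: "\<forall>x\<in>{0<..<L}. g x > 0"
      and g0: "d * g' 0 - a * g 0 = 0" and gL: "g' L = 0" by blast
    have L0': "0 < L" using x1 by simp
    have cs: "\<And>t. 0 < t \<Longrightarrow> t < L \<Longrightarrow> t \<noteq> x1 \<Longrightarrow> continuous (at t within ({0..L} - {x1})) s"
      unfolding s_def by (rule chi_cont)
    have B1: "phi' 0 * g 0 - g' 0 * phi 0 = 0" by (rule bc_left[OF d bc0 g0])
    have B1': "g' 0 * phi 0 - phi' 0 * g 0 = 0" using B1 by simp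
    have B2: "phi' L * g L - g' L * phi L = 0" using bcL gL by simp
    have B2': "g' L * phi L - phi' L * g L = 0" using bcL gL by simp
    have "lam \<le> l"
      by (rule green_le[OF L0' d Ef Eg pf pg cs B1 B2])
    moreover have "l \<le> lam"
      by (rule green_le[OF L0' d Eg Ef pg pf cs B1' B2'])
    ultimately show "l = lam" by simp
  qed
qed


theorem lemma3p5:
  fixes d a r x1 L :: real
  assumes "d > 0" and "a \<ge> 0" and "r > 0" and "0 < x1" and "x1 < L"
  shows "((\<lambda>\<xi>. lambda1 d a (\<lambda>x. r - \<xi> * chi x1 L x) 0 L) \<longlongrightarrow> lambda1D d a r 0 x1) at_top"
proof -
  note d = \<open>d > 0\<close> and a = \<open>a \<ge> 0\<close> and x1 = \<open>0 < x1\<close> \<open>x1 < L\<close>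
  define k where "k = a / (2*d)"
  have ka: "a = 2*d*k" unfolding k_def using d by simp
  have k: "k \<ge> 0" unfolding k_def using a d by simp
  obtain wD where wD1: "pi/(2*x1) \<le> wD" and wD2: "wD \<le> pi/x1" and wDe: "wD*x1 = pi/2 + arctan (k/wD)"
    using omegaD_ex[OF x1(1) k] by blast
  have "pi/(2*x1) > 0" using x1 by simp
  hence wD0: "wD > 0" using wD1 by linarith
  have lD: "lambda1D d a r 0 x1 = r - d*k^2 - d*wD^2"
    by (rule lambda1D_val[OF d a x1(1) ka wD0 wDe])
  show ?thesis
    unfolding lD tendsto_iff
  proof (intro allI impI)
    fix e :: real assume e: "e > 0"
    define w0 where "w0 = sqrt (max (wD^2/4) (wD^2 - e/(2*d)))"
    have mx0: "max (wD^2/4) (wD^2 - e/(2*d)) > 0" using wD0 by (simp add: less_max_iff_disj)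
    have w00: "w0 > 0" unfolding w0_def using mx0 by simp
    have "max (wD^2/4) (wD^2 - e/(2*d)) < wD^2" using wD0 e d by simp
    hence "w0 < sqrt (wD^2)" unfolding w0_def by (simp only: real_sqrt_less_iff)
    hence w0D: "w0 < wD" using wD0 by simp
    have w0sq: "w0^2 = max (wD^2/4) (wD^2 - e/(2*d))" unfolding w0_def using mx0 by simp
    hence w0e: "wD^2 - w0^2 \<le> e/(2*d)" by simp
    have w0lt: "w0*x1 < pi/2 + arctan (k/w0)" by (rule omega_lt[OF w00 w0D wDe k x1(1)])
    define p where "p = L0 k w0 x1"
    define q where "q = L1 k w0 x1"
    have p0: "p > 0" unfolding p_def using w00 x1 w0lt k by (intro L0_pos) auto
    define N0 where "N0 = k + 4*\<bar>q\<bar>/p + 1 + 1/(L-x1)"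
    have qp0: "4*\<bar>q\<bar>/p \<ge> 0" using p0 by simp
    have Lx0: "1/(L-x1) > 0" using x1 by simp
    have N0k: "N0 > k" unfolding N0_def using qp0 Lx0 by linarith
    have N00: "N0 > 0" using N0k k by simp
    show "\<forall>\<^sub>F \<xi> in at_top. dist (lambda1 d a (\<lambda>x. r - \<xi> * chi x1 L x) 0 L) (r - d*k^2 - d*wD^2) < e"
      unfolding eventually_at_top_linorder
    proof (intro exI allI impI)
      fix xi :: real assume xi: "xi \<ge> d * (N0^2 + wD^2)"
      define nf where "nf = (\<lambda>w. sqrt (xi/d - w^2))"
      have nfb: "nf w \<ge> N0" if "0 < w" "w \<le> wD" for w
      proof -
        have "w^2 \<le> wD^2" using that by (simp add: power_mono)
        moreover have "xi/d \<ge> N0^2 + wD^2" using xi d by (simp add: field_simps)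
        ultimately have "xi/d - w^2 \<ge> N0^2" by simp
        hence "sqrt (xi/d - w^2) \<ge> sqrt (N0^2)" by (simp only: real_sqrt_le_iff)
        thus ?thesis unfolding nf_def using N00 by simp
      qed
      have nfsq: "d * (nf w)^2 = xi - d*w^2" if "0 < w" "w \<le> wD" for w
      proof -
        have "w^2 \<le> wD^2" using that by (simp add: power_mono)
        moreover have "xi/d \<ge> N0^2 + wD^2" using xi d by (simp add: field_simps)
        moreover have "N0^2 \<ge> 0" by simp
        ultimately have "xi/d - w^2 \<ge> 0" by linarith
        hence "(nf w)^2 = xi/d - w^2" unfolding nf_def by simp
        thus ?thesis using d by (simp add: field_simps)
      qed
      define Mf where "Mf = (\<lambda>w. R0 k (nf w) L x1 * L1 k w x1 - L0 k w x1 * R1 k (nf w) L x1)"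
      have M0: "Mf w0 > 0" unfolding Mf_def
      proof (rule M_pos[OF k])
        show "L0 k w0 x1 > 0" using p0 p_def by simp
        have "nf w0 \<ge> N0" using nfb w00 w0D by simp
        thus "k + 4 * \<bar>L1 k w0 x1\<bar> / L0 k w0 x1 + 1 \<le> nf w0"
          unfolding N0_def p_def[symmetric] q_def[symmetric] using Lx0 by linarith
        have "nf w0 \<ge> 1/(L-x1)" using \<open>nf w0 \<ge> N0\<close> unfolding N0_def using qp0 k
          by linarith
        thus "1 \<le> nf w0 * (L - x1)" using x1 by (simp add: field_simps)
      qed
      have M1: "Mf wD < 0"
      proof -
        have "R0 k (nf wD) L x1 > 0" using nfb[OF wD0] N0k k by (intro R0_pos) auto
        moreover have "L1 k wD x1 < 0" by (rule L0_zero(2)[OF wD0 wDe])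
        ultimately show ?thesis unfolding Mf_def L0_zero(1)[OF wD0 wDe] by (simp add: mult_pos_neg)
      qed
      have cM: "continuous_on {w0..wD} Mf"
        unfolding Mf_def nf_def R0_def R1_def L0_def L1_def by (intro continuous_intros)
      obtain w where w: "w0 \<le> w" "w \<le> wD" "Mf w = 0"
        using IVT2'[of Mf wD 0 w0, OF _ _ _ cM] M0 M1 w0D by auto
      have ww: "w0 < w" "w < wD" using w M0 M1 by (auto simp: order.order_iff_strict)
      have w0': "0 < w" using w00 ww by simp
      have wlt: "w*x1 < pi/2 + arctan (k/w)" by (rule omega_lt[OF w0' ww(2) wDe k x1(1)])
      have nk: "nf w > k" using nfb[OF w0' w(2)] N0k by simp
      have Meq: "R0 k (nf w) L x1 * L1 k w x1 = L0 k w x1 * R1 k (nf w) L x1"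
        using w(3) unfolding Mf_def by simp
      have val: "lambda1 d a (\<lambda>x. r - xi * chi x1 L x) 0 L = r - d*k^2 - d*w^2"
        by (rule lambda1_val[OF d a ka x1 w0' wlt nk nfsq[OF w0' w(2)] Meq])
      have "w^2 \<le> wD^2" "w0^2 \<le> w^2" using ww w00 by (simp_all add: power_mono)
      hence "dist (r - d*k^2 - d*w^2) (r - d*k^2 - d*wD^2) = d * (wD^2 - w^2)"
        using d by (simp add: dist_real_def abs_if algebra_simps)
      also have "\<dots> \<le> d * (wD^2 - w0^2)" using \<open>w0^2 \<le> w^2\<close> d by simp
      also have "\<dots> \<le> d * (e/(2*d))" using w0e d by (intro mult_left_mono) auto
      also have "\<dots> < e" using d e by simp
      finally show "dist (lambda1 d a (\<lambda>x. r - xi * chi x1 L x) 0 L) (r - d*k^2 - d*wD^2) < e"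
        unfolding val .
    qed
  qed
qed


end
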